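(* Under the standing assumptions in the context, with $h^E$, $h^S$ defined as there, for all $r\in[r_0,r_1]$, $$0\le h^S(r)-h^E(r)\le \frac{g}{u_0^2-g h_0}\,\big(h^E(r)\big)^2\,\big(1-\nu(r)\big).$$ In particular there is a constant $c>0$ (namely $c=g/(u_0^2-gh_0)$) with $h^S(r)-h^E(r)\le c\,(h^E(r))^2(1-\nu(r))$ for all $r\in[r_0,r_1]$.
   Context: Standing assumptions and notation. Let $g>0$, $0<r_0<r_1$, and let $f\in C^1([r_0,r_1])$ with $f'(r)\le 0$ for all $r\in[r_0,r_1]$, $f'(r_0)=0$, and $f(r_0)>f(r_1)$. Set $\nu(r)=1/\sqrt{1+(f'(r))^2}$. Let $h_0>0$, $u_0>0$ with $u_0^2/(g h_0)>1$. Define $q_e=\tfrac12 u_0^2+g\,(f(r_0)+h_0)$, $q_w=r_0h_0u_0$, $\eta(r)=q_e-g f(r)$, and $$\mathcal P^S_r(h)=g h^3-\eta(r)h^2+\frac{q_w^2}{2r^2},\qquad \mathcal P^E_r(h)=g\,\nu(r)\, h^3-\eta(r)h^2+\frac{q_w^2}{2r^2}.$$ Let $\nu^S(r)=1$, $\nu^E(r)=\nu(r)$, $h^M_\star(r)=\dfrac{2\eta(r)}{3g\,\nu^M(r)}$ for $M\in\{E,S\}$. For each $r\in[r_0,r_1]$ and $M\in\{E,S\}$, $h^M(r)$ denotes the unique root of $\mathcal P^M_r$ in the interval $(0,h^M_\star(r))$ (this root exists and $h^M$ is continuous with $h^M(r_0)=h_0$). *)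

theory Defs
  imports "HOL-Analysis.Analysis"
begin

definition nu :: "(real \<Rightarrow> real) \<Rightarrow> real \<Rightarrow> real" where
  "nu f' r = 1 / sqrt (1 + (f' r)^2)"

definition q_e :: "real \<Rightarrow> (real \<Rightarrow> real) \<Rightarrow> real \<Rightarrow> real \<Rightarrow> real \<Rightarrow> real" where
  "q_e g f r0 h0 u0 = u0^2 / 2 + g * (f r0 + h0)"

definition q_w :: "real \<Rightarrow> real \<Rightarrow> real \<Rightarrow> real" where
  "q_w r0 h0 u0 = r0 * h0 * u0"

definition eta :: "real \<Rightarrow> (real \<Rightarrow> real) \<Rightarrow> real \<Rightarrow> real \<Rightarrow> real \<Rightarrow> real \<Rightarrow> real" where
  "eta g f r0 h0 u0 r = q_e g f r0 h0 u0 - g * f r"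

definition polyM :: "real \<Rightarrow> (real \<Rightarrow> real) \<Rightarrow> real \<Rightarrow> real \<Rightarrow> real \<Rightarrow> real \<Rightarrow> real \<Rightarrow> real \<Rightarrow> real" where
  "polyM g f r0 h0 u0 nuM r h =
     g * nuM * h^3 - eta g f r0 h0 u0 r * h^2 + (q_w r0 h0 u0)^2 / (2 * r^2)"

definition PS :: "real \<Rightarrow> (real \<Rightarrow> real) \<Rightarrow> real \<Rightarrow> real \<Rightarrow> real \<Rightarrow> real \<Rightarrow> real \<Rightarrow> real" where
  "PS g f r0 h0 u0 r h = polyM g f r0 h0 u0 1 r h"

definition PE :: "real \<Rightarrow> (real \<Rightarrow> real) \<Rightarrow> (real \<Rightarrow> real) \<Rightarrow> real \<Rightarrow> real \<Rightarrow> real \<Rightarrow> real \<Rightarrow> real \<Rightarrow> real" where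
  "PE g f f' r0 h0 u0 r h = polyM g f r0 h0 u0 (nu f' r) r h"

definition hstarS :: "real \<Rightarrow> (real \<Rightarrow> real) \<Rightarrow> real \<Rightarrow> real \<Rightarrow> real \<Rightarrow> real \<Rightarrow> real" where
  "hstarS g f r0 h0 u0 r = 2 * eta g f r0 h0 u0 r / (3 * g)"

definition hstarE :: "real \<Rightarrow> (real \<Rightarrow> real) \<Rightarrow> (real \<Rightarrow> real) \<Rightarrow> real \<Rightarrow> real \<Rightarrow> real \<Rightarrow> real \<Rightarrow> real" where
  "hstarE g f f' r0 h0 u0 r = 2 * eta g f r0 h0 u0 r / (3 * g * nu f' r)"

definition hS :: "real \<Rightarrow> (real \<Rightarrow> real) \<Rightarrow> real \<Rightarrow> real \<Rightarrow> real \<Rightarrow> real \<Rightarrow> real" where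
  "hS g f r0 h0 u0 r =
     (THE h. 0 < h \<and> h < hstarS g f r0 h0 u0 r \<and> PS g f r0 h0 u0 r h = 0)"

definition hE :: "real \<Rightarrow> (real \<Rightarrow> real) \<Rightarrow> (real \<Rightarrow> real) \<Rightarrow> real \<Rightarrow> real \<Rightarrow> real \<Rightarrow> real \<Rightarrow> real" where
  "hE g f f' r0 h0 u0 r =
     (THE h. 0 < h \<and> h < hstarE g f f' r0 h0 u0 r \<and> PE g f f' r0 h0 u0 r h = 0)"

end

theory Submission
  imports Defs
begin

lemma pmono:
  fixes g t eta K a b :: real
  assumes "g > 0" "t > 0" "0 < a" "a < b" "b \<le> 2*eta/(3*g*t)"
  shows "g*t*b^3 - eta*b^2 + K < g*t*a^3 - eta*a^2 + K"
proof -
  have gtb: "3*(g*t)*b \<le> 2*eta" using assms by (simp add: field_simps)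
  have eta: "eta > 0" using gtb assms by (smt (verit) mult_pos_pos)
  have aa: "a*a < a*b" using assms by simp
  have ab: "a*b < b*b" using assms by simp
  have s: "2*(a^2+a*b+b^2) < 3*b*(a+b)" using aa ab by (simp add: power2_eq_square algebra_simps)
  have "3*b*(g*t*(a^2+a*b+b^2)) = (3*(g*t)*b)*(a^2+a*b+b^2)" by simp
  also have "\<dots> \<le> 2*eta*(a^2+a*b+b^2)" using gtb assms
    by (intro mult_right_mono) (auto intro!: add_nonneg_nonneg)
  also have "\<dots> < 3*b*(eta*(a+b))" using mult_strict_left_mono[OF s eta] by (simp add: algebra_simps)
  finally have "3*b*(g*t*(a^2+a*b+b^2)) < 3*b*(eta*(a+b))" by simp
  hence D: "g*t*(a^2+a*b+b^2) < eta*(a+b)" using assms by simp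
  have "(g*t*a^3 - eta*a^2 + K) - (g*t*b^3 - eta*b^2 + K) = (b-a)*(eta*(a+b) - g*t*(a^2+a*b+b^2))"
    by (simp add: algebra_simps power2_eq_square power3_eq_cube)
  also have "\<dots> > 0" using D assms by simp
  finally show ?thesis by simp
qed

lemma root_ex:
  fixes g t eta K hs :: real and P :: "real \<Rightarrow> real"
  assumes "g > 0" "t > 0" "eta > 0" "K > 0" "27*g^2*t^2*K < 4*eta^3"
    and hs: "hs = 2*eta/(3*g*t)" and P: "\<And>h. P h = g*t*h^3 - eta*h^2 + K"
  shows "\<exists>!h. 0 < h \<and> h < hs \<and> P h = 0"
proof -
  have hspos: "hs > 0" using assms by simp
  have "P hs = K - 4*eta^3/(27*g^2*t^2)"
    unfolding P hs using assms by (simp add: field_simps power2_eq_square power3_eq_cube)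
  also have "\<dots> < 0" using assms by (simp add: field_simps)
  finally have Phs: "P hs < 0" .
  have P0: "P 0 > 0" using P assms by simp
  have cont: "continuous_on {0..hs} P" unfolding P[abs_def] by (intro continuous_intros)
  obtain x where x: "0 \<le> x" "x \<le> hs" "P x = 0"
    using IVT2'[of P hs 0 0, OF _ _ _ cont] Phs P0 hspos by auto
  have x1: "0 < x" "x < hs" using x P0 Phs by (auto simp: le_less)
  show ?thesis
  proof (rule ex1I[of _ x])
    show "0 < x \<and> x < hs \<and> P x = 0" using x x1 by auto
    fix y assume y: "0 < y \<and> y < hs \<and> P y = 0"
    show "y = x"
    proof (rule ccontr)
      assume "y \<noteq> x"
      then consider "y < x" | "x < y" by linarith
      thus False
      proof cases
        case 1 thus False using pmono[of g t y x eta K] hs P y x x1 assms by auto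
      next
        case 2 thus False using pmono[of g t x y eta K] hs P y x x1 assms by auto
      qed
    qed
  qed
qed

lemma core:
  fixes g nu eta K a b L :: real
  assumes g: "g > 0" and nu: "0 < nu" "nu \<le> 1" and a: "0 < a" "a < 2*eta/(3*g*nu)"
    and pa: "g*nu*a^3 - eta*a^2 + K = 0" and b: "0 < b" "b < 2*eta/(3*g)"
    and pb: "g*b^3 - eta*b^2 + K = 0" and L: "L > 0" "L \<le> 2*eta - 3*g*b"
  shows "0 \<le> b - a \<and> b - a \<le> g/L * a^2 * (1-nu)"
proof -
  have gb: "3*g*b < 2*eta" using b g by (simp add: field_simps)
  have ab: "a \<le> b"
  proof (rule ccontr)
    assume "\<not> a \<le> b"
    hence "b < a" by simp
    hence "g*nu*a^3 - eta*a^2 + K < g*nu*b^3 - eta*b^2 + K"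
      using pmono[of g nu b a eta K] g nu a b by simp
    moreover have "g*nu*b^3 - eta*b^2 + K = - (g*(1-nu)*b^3)" using pb by (simp add: algebra_simps)
    moreover have "g*(1-nu)*b^3 \<ge> 0" using g nu b by simp
    ultimately show False using pa by simp
  qed
  define D where "D = eta*(a+b) - g*(a^2+a*b+b^2)"
  have iden: "(b-a)*D = g*(1-nu)*a^3"
  proof -
    have "(b-a)*D = (g*a^3 - eta*a^2) - (g*b^3 - eta*b^2)"
      unfolding D_def by (simp add: algebra_simps power2_eq_square power3_eq_cube)
    also have "\<dots> = g*(1-nu)*a^3" using pa pb by (simp add: algebra_simps)
    finally show ?thesis .
  qed
  have "D - a*(2*eta - 3*g*b) = (b-a)*(eta - g*(b-a))"
    unfolding D_def by (simp add: algebra_simps power2_eq_square)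
  moreover have "eta - g*(b-a) \<ge> 0"
  proof -
    have "g*(b-a) \<le> g*b" using g a by simp
    moreover have "g*b > 0" using g b by simp
    moreover have "3*(g*b) < 2*eta" using gb by simp
    ultimately show ?thesis by linarith
  qed
  ultimately have "D - a*(2*eta - 3*g*b) \<ge> 0" using ab by simp
  moreover have "a*L \<le> a*(2*eta - 3*g*b)" using L a by simp
  ultimately have DL: "a*L \<le> D" by linarith
  have "(b-a)*(a*L) \<le> (b-a)*D" using DL ab by (simp add: mult_left_mono)
  hence "a*((b-a)*L) \<le> a*(g*(1-nu)*a^2)" using iden by (simp add: algebra_simps power3_eq_cube power2_eq_square)
  hence "(b-a)*L \<le> g*(1-nu)*a^2" using a by simp
  hence "b-a \<le> g*(1-nu)*a^2 / L" using L by (simp add: field_simps)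
  thus ?thesis using ab by (simp add: algebra_simps)
qed

theorem proposition1:
  fixes g r0 r1 h0 u0 :: real and f f' :: "real \<Rightarrow> real"
  assumes g: "g > 0"
    and r: "0 < r0" "r0 < r1"
    and fderiv: "\<forall>r\<in>{r0..r1}. (f has_real_derivative f' r) (at r within {r0..r1})"
    and fcont: "continuous_on {r0..r1} f'"
    and fmono: "\<forall>r\<in>{r0..r1}. f' r \<le> 0"
    and f'r0: "f' r0 = 0"
    and fdrop: "f r0 > f r1"
    and h0: "h0 > 0" and u0: "u0 > 0"
    and froude: "u0^2 / (g * h0) > 1"
  shows "\<forall>r\<in>{r0..r1}.
           0 \<le> hS g f r0 h0 u0 r - hE g f f' r0 h0 u0 r \<and>
           hS g f r0 h0 u0 r - hE g f f' r0 h0 u0 r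
             \<le> g / (u0^2 - g * h0) * (hE g f f' r0 h0 u0 r)^2 * (1 - nu f' r)"
proof
  fix r assume rr: "r \<in> {r0..r1}"
  define eta0 where "eta0 = u0^2/2 + g*h0"
  define K0 where "K0 = h0^2*u0^2/2"
  define et where "et = eta g f r0 h0 u0 r"
  define K where "K = (q_w r0 h0 u0)^2 / (2*r^2)"
  define n where "n = nu f' r"
  have gh: "g*h0 < u0^2" using froude g h0 by (simp add: field_simps)
  have rpos: "r > 0" using rr r by simp
  have fle: "f r \<le> f r0"
  proof (rule DERIV_nonpos_imp_decreasing_open[of r0 r f])
    show "r0 \<le> r" using rr by simp
    fix x assume x: "r0 < x" "x < r"
    hence "at x within {r0..r1} = at x" using rr by (intro at_within_Icc_at) auto
    thus "\<exists>y. (f has_real_derivative y) (at x) \<and> y \<le> 0"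
      using fderiv fmono x rr by (metis atLeastAtMost_iff less_imp_le order_trans)
  next
    have "continuous_on {r0..r1} f"
      using fderiv by (metis DERIV_continuous continuous_on_eq_continuous_within)
    thus "continuous_on {r0..r} f" by (rule continuous_on_subset) (use rr in auto)
  qed
  have et0: "eta0 \<le> et" unfolding et_def eta_def q_e_def eta0_def using fle g
    by (simp add: algebra_simps)
  have eta0pos: "eta0 > 0" unfolding eta0_def using g h0 u0 by (simp add: add_pos_pos)
  have Kdef: "K = r0^2*h0^2*u0^2/(2*r^2)" unfolding K_def q_w_def by (simp add: power_mult_distrib)
  have Kpos: "K > 0" using Kdef r h0 u0 rpos by simp
  have KK0: "K \<le> K0"
  proof -
    have "r0^2 \<le> r^2" using rr r by (intro power_mono) auto
    hence "r0^2/r^2 \<le> 1" using rpos by simp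
    hence "(r0^2/r^2)*(h0^2*u0^2/2) \<le> 1*(h0^2*u0^2/2)" by (intro mult_right_mono) auto
    thus ?thesis unfolding Kdef K0_def by (simp add: field_simps)
  qed
  have key0: "27*g^2*K0 < 4*eta0^3"
  proof -
    define x where "x = u0^2" define y where "y = g*h0"
    have id: "(x+2*y)^3 - 27*x*y^2 = (x-y)^2*(x+8*y)" by (simp add: algebra_simps power2_eq_square power3_eq_cube)
    have ypos: "y > 0" unfolding y_def using g h0 by simp
    have xy: "y < x" unfolding x_def y_def using gh by simp
    have "x + 8*y > 0" using xy ypos by linarith
    moreover have "(x-y)^2 > 0" using xy by simp
    ultimately have "(x-y)^2*(x+8*y) > 0" by simp
    with id have "27*x*y^2 < (x+2*y)^3" by linarith
    thus ?thesis unfolding x_def y_def K0_def eta0_def by (simp add: field_simps power2_eq_square power3_eq_cube)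
  qed
  have etpos: "et > 0" using et0 eta0pos by simp
  have "eta0^3 \<le> et^3" using et0 eta0pos by (intro power_mono) auto
  hence key: "27*g^2*K < 4*et^3" using key0 KK0 g
    by (smt (verit) mult_left_mono zero_le_power2 mult_nonneg_nonneg)
  have s1: "1 \<le> sqrt (1 + (f' r)^2)" by simp
  have npos: "0 < n" and nle: "n \<le> 1" unfolding n_def nu_def
    using s1 add_pos_nonneg[OF zero_less_one zero_le_power2[of "f' r"]] by (auto simp: divide_le_eq)
  have keyn: "27*g^2*n^2*K < 4*et^3"
  proof -
    have "n^2 \<le> 1" using npos nle by (simp add: power_le_one)
    hence "27*g^2*K*n^2 \<le> 27*g^2*K*1" using Kpos g by (intro mult_left_mono) auto
    thus ?thesis using key by (simp add: algebra_simps)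
  qed
  have PSe: "\<And>h. PS g f r0 h0 u0 r h = g*1*h^3 - et*h^2 + K"
    unfolding PS_def polyM_def et_def K_def by simp
  have PEe: "\<And>h. PE g f f' r0 h0 u0 r h = g*n*h^3 - et*h^2 + K"
    unfolding PE_def polyM_def et_def K_def n_def by simp
  have hsS: "hstarS g f r0 h0 u0 r = 2*et/(3*g*1)" unfolding hstarS_def et_def by simp
  have hsE: "hstarE g f f' r0 h0 u0 r = 2*et/(3*g*n)" unfolding hstarE_def et_def n_def by simp
  have exS: "\<exists>!h. 0 < h \<and> h < hstarS g f r0 h0 u0 r \<and> PS g f r0 h0 u0 r h = 0"
    by (rule root_ex[OF g _ etpos Kpos _ hsS PSe]) (use key in auto)
  have exE: "\<exists>!h. 0 < h \<and> h < hstarE g f f' r0 h0 u0 r \<and> PE g f f' r0 h0 u0 r h = 0"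
    by (rule root_ex[OF g npos etpos Kpos keyn hsE PEe])
  define b where "b = hS g f r0 h0 u0 r"
  define a where "a = hE g f f' r0 h0 u0 r"
  have bP: "0 < b \<and> b < hstarS g f r0 h0 u0 r \<and> PS g f r0 h0 u0 r b = 0"
    unfolding b_def hS_def by (rule theI'[OF exS])
  have aP: "0 < a \<and> a < hstarE g f f' r0 h0 u0 r \<and> PE g f f' r0 h0 u0 r a = 0"
    unfolding a_def hE_def by (rule theI'[OF exE])
  have b1: "0 < b" "b < 2*et/(3*g)" "g*b^3 - et*b^2 + K = 0" using bP hsS PSe by auto
  have a1: "0 < a" "a < 2*et/(3*g*n)" "g*n*a^3 - et*a^2 + K = 0" using aP hsE PEe by auto
  have bh0: "b \<le> h0"
  proof (rule ccontr)
    assume "\<not> b \<le> h0"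
    hence hb: "h0 < b" by simp
    have "g*1*b^3 - et*b^2 + K < g*1*h0^3 - et*h0^2 + K"
      using pmono[of g 1 h0 b et K] g h0 hb b1 by simp
    moreover have "g*h0^3 - et*h0^2 + K \<le> g*h0^3 - eta0*h0^2 + K0"
    proof -
      have "eta0*h0^2 \<le> et*h0^2" using et0 by (intro mult_right_mono) auto
      thus ?thesis using KK0 by linarith
    qed
    moreover have "g*h0^3 - eta0*h0^2 + K0 = 0" unfolding eta0_def K0_def
      by (simp add: algebra_simps power2_eq_square power3_eq_cube)
    ultimately show False using b1 by simp
  qed
  have L: "u0^2 - g*h0 \<le> 2*et - 3*g*b"
  proof -
    have "g*b \<le> g*h0" using bh0 g by simp
    thus ?thesis using et0 unfolding eta0_def by linarith
  qed
  have "0 \<le> b - a \<and> b - a \<le> g/(u0^2 - g*h0) * a^2 * (1-n)"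
    by (rule core[OF g npos nle a1 b1]) (use gh L in auto)
  thus "0 \<le> hS g f r0 h0 u0 r - hE g f f' r0 h0 u0 r \<and>
           hS g f r0 h0 u0 r - hE g f f' r0 h0 u0 r
             \<le> g / (u0^2 - g * h0) * (hE g f f' r0 h0 u0 r)^2 * (1 - nu f' r)"
    unfolding a_def b_def n_def .
qed

end
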